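(* For $n\in\mathbb{N}$ let $X_n$ be an integer-valued random variable with $\mathbb{P}[X_n=k]=\frac{B(n,k)}{2^nn!}$, $k=0,\dots,n$, where $(t+1)(t+3)\cdots(t+2n-1)=\sum_{k=0}^nB(n,k)t^k$. Then, locally uniformly in $z\in\mathbb{C}$, $$\lim_{n\to\infty}\frac{\mathbb{E}[e^{zX_n}]}{e^{(\frac12\log n)(e^z-1)}}=\frac{2^{e^z}\,\Gamma(\frac12e^z)}{2\sqrt{\pi}\,\Gamma(e^z)}.$$ *)

theory Defs
  imports "HOL-Probability.Probability" "HOL-Computational_Algebra.Polynomial"
begin

definition B :: "nat \<Rightarrow> nat \<Rightarrow> nat" where
  "B n k = coeff (\<Prod>j<n. [:2 * j + 1, 1:]) k"

definition limit_expr :: "complex \<Rightarrow> complex" where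
  "limit_expr z = (2 powr exp z) * Gamma (exp z / 2)
                  / (2 * complex_of_real (sqrt pi) * Gamma (exp z))"

text \<open>At points where Gamma(e^z) has a pole (e^z a nonpositive integer) the paper's
  expression is understood as its (removable) limit value.\<close>
definition limit_fun :: "complex \<Rightarrow> complex" where
  "limit_fun z = (if exp z \<in> \<int>\<^sub>\<le>\<^sub>0 then Lim (at z) limit_expr else limit_expr z)"

end

theory Submission
  imports Defs "HOL-Analysis.Analysis"
begin

definition gg :: "nat \<Rightarrow> complex \<Rightarrow> complex" where
  "gg n a = pochhammer a n / fact n * exp ((1 - a) * of_real (ln (real n)))"

definition hh :: "nat \<Rightarrow> complex \<Rightarrow> complex" where
  "hh k a = (a + of_nat k) / of_nat (k+1) * exp (- (a - 1) * of_real (ln (real (k+1)) - ln (real k)))"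

lemma gg_Suc: assumes "k \<ge> 1" shows "gg (Suc k) a = gg k a * hh k a"
proof -
  have e: "(1 - a) * of_real (ln (real (Suc k))) = (1 - a) * of_real (ln (real k)) + (- (a - 1) * of_real (ln (real (k+1)) - ln (real k)))"
    by (simp add: algebra_simps)
  show ?thesis unfolding gg_def hh_def e exp_add pochhammer_Suc fact_Suc
    by (simp add: field_simps)
qed

lemma gg_1: "gg 1 a = a" by (simp add: gg_def)

lemma gg_prod: "gg (Suc N) a = a * (\<Prod>n<N. hh (Suc n) a)"
proof (induction N)
  case 0 then show ?case by (simp add: gg_def)
next
  case (Suc N)
  have "gg (Suc (Suc N)) a = gg (Suc N) a * hh (Suc N) a" by (rule gg_Suc) simp
  then show ?case using Suc by (simp add: mult.assoc)
qed

lemma L_bounds: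
  assumes "k \<ge> (1::nat)"
  shows "1 / (real k + 1) \<le> ln (real (k+1)) - ln (real k)" "ln (real (k+1)) - ln (real k) \<le> 1 / real k"
proof -
  have k: "real k > 0" using assms by simp
  have "ln ((real k + 1) / real k) \<le> (real k + 1) / real k - 1" by (rule ln_le_minus_one) (use k in simp)
  then show "ln (real (k+1)) - ln (real k) \<le> 1 / real k" using k by (simp add: ln_div field_simps)
  have "ln (real k / (real k + 1)) \<le> real k / (real k + 1) - 1" by (rule ln_le_minus_one) (use k in simp)
  then show "1 / (real k + 1) \<le> ln (real (k+1)) - ln (real k)" using k by (simp add: ln_div field_simps)
qed

lemma hh_bound:
  fixes a :: complex and k :: nat and R :: real
  assumes R: "norm (a - 1) \<le> R" and k1: "k \<ge> 1" and k2: "2*R + 1 \<le> real k"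
    and k3: "(2*R^2 + 2*R) / (real k + 1)^2 \<le> 1/2"
  shows "norm (hh k a - 1) \<le> 2 * ((2*R^2 + 2*R) / (real k + 1)^2)"
proof -
  define b where "b = a - 1"
  define u where "u = b / of_nat (k+1)"
  define L where "L = ln (real (k+1)) - ln (real k)"
  have R0: "R \<ge> 0" using R norm_ge_zero order_trans by blast
  have kp: "real k + 1 > 0" by simp
  have nz: "(1 + of_nat k :: complex) \<noteq> 0"
    by (metis of_nat_Suc of_nat_eq_0_iff add.commute nat.distinct(1))
  have nu: "norm u \<le> R / (real k + 1)"
  proof -
    have "norm (of_nat (k+1) :: complex) = real k + 1" by (simp only: norm_of_nat)
    then have "norm u = norm (a - 1) / (real k + 1)" unfolding u_def b_def by (simp add: norm_divide)
    then show ?thesis using R kp by (simp add: divide_right_mono)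
  qed
  have "R / (real k + 1) \<le> 1/2" using k2 R0 kp by (simp add: field_simps)
  with nu have nu2: "norm u \<le> 1/2" by linarith
  have hh: "hh k a = (1 + u) * exp (- b * of_real L)"
  proof -
    have q: "(a + of_nat k) / of_nat (k+1) = 1 + u"
      unfolding u_def b_def using nz by (simp add: field_simps)
    show ?thesis unfolding hh_def q L_def b_def by simp
  qed
  have u1: "1 + u \<noteq> 0"
  proof
    assume "1 + u = 0" then have "u = -1" by (simp add: eq_neg_iff_add_eq_0 add.commute)
    with nu2 show False by simp
  qed
  define t where "t = Ln (1 + u) - b * of_real L"
  have ht: "hh k a = exp t" unfolding hh t_def using u1 by (simp add: exp_diff exp_minus field_simps)
  have Lb: "1 / (real k + 1) \<le> L" "L \<le> 1 / real k" using L_bounds[OF k1] by (simp_all add: L_def)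
  have d1: "\<bar>1 / (real k + 1) - L\<bar> \<le> 1 / real k - 1 / (real k + 1)" using Lb by linarith
  have d2: "1 / real k - 1 / (real k + 1) \<le> 2 / (real k + 1)^2"
  proof -
    have kk: "real k \<ge> 1" using k1 by simp
    have "1 / real k - 1 / (real k + 1) = 1 / (real k * (real k + 1))" using kk by (simp add: field_simps)
    also have "\<dots> \<le> 2 / (real k + 1)^2"
      using kk by (simp add: divide_simps power2_eq_square)
    finally show ?thesis .
  qed
  have teq: "t = (Ln (1 + u) - u) + b * of_real (1 / (real k + 1) - L)"
  proof -
    have ub: "u = b * of_real (1 / (real k + 1))" by (simp add: u_def add.commute divide_inverse)
    have "b * of_real (1 / (real k + 1) - L) = u - b * of_real L"
      unfolding ub of_real_diff by (rule right_diff_distrib)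
    then show ?thesis unfolding t_def by simp
  qed
  have n1: "norm (Ln (1 + u) - u) \<le> norm u ^ 2 / (1 - norm u)"
    by (rule Ln_approx_linear) (use nu2 in simp)
  also have "\<dots> \<le> norm u ^ 2 / (1/2)" by (rule divide_left_mono) (use nu2 in auto)
  also have "\<dots> = 2 * norm u ^ 2" by simp
  also have "\<dots> \<le> 2 * (R / (real k + 1))^2"
    using nu by (intro mult_left_mono power_mono) simp_all
  finally have n1': "norm (Ln (1 + u) - u) \<le> 2 * R^2 / (real k + 1)^2" by (simp add: power_divide)
  have n2: "norm (b * of_real (1 / (real k + 1) - L)) \<le> R * (2 / (real k + 1)^2)"
    unfolding norm_mult norm_of_real b_def
    using R d1 d2 R0 by (intro mult_mono) simp_all
  have nt: "norm t \<le> (2*R^2 + 2*R) / (real k + 1)^2"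
  proof -
    have "norm t \<le> norm (Ln (1 + u) - u) + norm (b * of_real (1 / (real k + 1) - L))"
      unfolding teq by (rule norm_triangle_ineq)
    also have "\<dots> \<le> 2 * R^2 / (real k + 1)^2 + R * (2 / (real k + 1)^2)" using n1' n2 by linarith
    also have "\<dots> = (2*R^2 + 2*R) / (real k + 1)^2" by (simp add: field_simps)
    finally show ?thesis .
  qed
  have nt2: "norm t \<le> 1/2" using nt k3 by linarith
  have "norm (exp t - 1) \<le> exp (norm t) * norm t" using Taylor_exp_field[of t 0] by simp
  also have "exp (norm t) \<le> 2" using exp_half_le2 nt2 by (meson exp_le_cancel_iff order_trans)
  then have "exp (norm t) * norm t \<le> 2 * norm t" by (intro mult_right_mono) simp_all
  finally have "norm (exp t - 1) \<le> 2 * norm t" .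
  with nt show ?thesis unfolding ht by linarith
qed

lemma cancel_aux: "(c::complex) \<noteq> 0 \<Longrightarrow> (p * c) / (f * e) * (m / c) = p / f * (m / e)"
  by (cases "f = 0"; cases "e = 0") (auto simp: field_simps)

lemma gg_pointwise: "(\<lambda>n. gg n a) \<longlonglongrightarrow> rGamma a"
proof -
  have ev: "eventually (\<lambda>n. gg n a = rGamma_series a n * inverse (a * inverse (of_nat n) + 1)) sequentially"
    using eventually_gt_at_top[of "nat \<lceil>norm a\<rceil>"]
  proof eventually_elim
    case (elim n)
    then have n0: "n > 0" by simp
    have "norm a < real n" using elim by linarith
    then have an: "a + of_nat n \<noteq> 0"
      by (metis add.commute add_eq_0_iff norm_minus_cancel norm_of_nat order_less_irrefl)
    have en: "exp (of_real (ln (real n))) = (of_nat n :: complex)" using n0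
      by (simp add: exp_of_real)
    have "(1 - a) * of_real (ln (real n)) = of_real (ln (real n)) - a * of_real (ln (real n))"
      by (simp add: algebra_simps)
    then have e2: "exp ((1 - a) * of_real (ln (real n))) = of_nat n / exp (a * of_real (ln (real n)))"
      by (simp add: exp_diff en)
    have i: "inverse (a * inverse (of_nat n) + 1) = of_nat n / (a + of_nat n)" using n0 by (simp add: field_simps)
    have E: "exp (a * of_real (ln (real n))) \<noteq> 0" by simp
    have F: "(fact n :: complex) \<noteq> 0" by simp
    have "rGamma_series a n * (of_nat n / (a + of_nat n)) =
      (pochhammer a n * (a + of_nat n)) / (fact n * exp (a * of_real (ln (real n)))) * (of_nat n / (a + of_nat n))"
      unfolding rGamma_series_def by (simp add: pochhammer_Suc)
    also have "\<dots> = pochhammer a n / fact n * (of_nat n / exp (a * of_real (ln (real n))))"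
      using an by (rule cancel_aux)
    finally show ?case unfolding gg_def e2 i by simp
  qed
  have "(\<lambda>n. rGamma_series a n * inverse (a * inverse (of_nat n) + 1)) \<longlonglongrightarrow> rGamma a * inverse (a * 0 + 1)"
    by (intro tendsto_intros lim_inverse_n) simp
  then show ?thesis by (subst tendsto_cong[OF ev]) simp
qed

lemma nz2: "(2 + of_nat n :: complex) \<noteq> 0"
proof -
  have "(2 + of_nat n :: complex) = of_nat (n + 2)" by simp
  then show ?thesis by (simp only: of_nat_eq_0_iff)
qed

lemma uniform_limit_Suc_shift:
  assumes "uniform_limit A (\<lambda>n. f (Suc n)) l sequentially"
  shows "uniform_limit A f l sequentially"
proof (rule uniform_limitI)
  fix e :: real assume "e > 0"
  from uniform_limitD[OF assms this]
  have "eventually (\<lambda>n. \<forall>x\<in>A. dist (f (Suc n) x) (l x) < e) sequentially" .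
  then show "eventually (\<lambda>n. \<forall>x\<in>A. dist (f n x) (l x) < e) sequentially"
    by (rule eventually_sequentially_Suc[THEN iffD1])
qed

lemma gg_uniform:
  assumes A: "compact A"
  shows "uniform_limit A gg rGamma sequentially"
proof -
  obtain R0 where R0: "\<And>a. a \<in> A \<Longrightarrow> norm a \<le> R0"
    using compact_imp_bounded[OF A] bounded_iff by blast
  define R where "R = R0 + 1"
  have R: "\<And>a. a \<in> A \<Longrightarrow> norm (a - 1) \<le> R"
    unfolding R_def using R0 by (smt (verit) norm_one norm_triangle_ineq4)
  have Rnn: "R \<ge> 0" if "A \<noteq> {}" using that R norm_ge_zero order_trans by blast
  define C where "C = 2*R^2 + 2*R"
  define M where "M = (\<lambda>n::nat. 2 * C * inverse (real n ^ 2))"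
  have summ: "summable (\<lambda>n. M (n + 2))"
    unfolding M_def
    by (intro summable_ignore_initial_segment summable_mult inverse_power_summable) simp
  have evb: "eventually (\<lambda>n. \<forall>a\<in>A. norm (hh (Suc n) a - 1) \<le> M (n + 2)) sequentially"
  proof (cases "A = {}")
    case True then show ?thesis by simp
  next
    case False
    then have R0': "R \<ge> 0" and C0: "C \<ge> 0" using Rnn unfolding C_def by auto
    show ?thesis using eventually_ge_at_top[of "nat \<lceil>2*R + 1 + 2*C\<rceil>"]
    proof eventually_elim
      case (elim n)
      then have nb: "real n \<ge> 2*R + 1 + 2*C" by linarith
      show ?case
      proof
        fix a assume a: "a \<in> A"
        have k2: "2*R + 1 \<le> real (Suc n)" using nb C0 by simp
        have sq: "real (Suc n) + 1 \<le> (real (Suc n) + 1)^2" by (simp add: power2_eq_square)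
        have k3: "C / (real (Suc n) + 1)^2 \<le> 1/2"
        proof -
          have "2 * C \<le> (real (Suc n) + 1)^2" using nb sq R0' by simp
          then show ?thesis by (simp add: divide_simps)
        qed
        have "norm (hh (Suc n) a - 1) \<le> 2 * (C / (real (Suc n) + 1)^2)"
          using hh_bound[OF R[OF a] _ k2 k3[unfolded C_def]] unfolding C_def by simp
        also have "\<dots> = M (n + 2)" unfolding M_def by (simp add: field_simps)
        finally show "norm (hh (Suc n) a - 1) \<le> M (n + 2)" .
      qed
    qed
  qed
  have cont: "\<And>n. continuous_on A (hh (Suc n))"
    unfolding hh_def by (intro continuous_intros) (auto simp: nz2)
  have uc: "uniformly_convergent_on A (\<lambda>N a. \<Prod>n<N. hh (Suc n) a)"
    by (rule uniformly_convergent_on_prod'[OF cont A]) (rule Weierstrass_m_test'_ev[OF eventually_mono[OF evb] summ], simp)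
  define P where "P = (\<lambda>a. lim (\<lambda>N. \<Prod>n<N. hh (Suc n) a))"
  have ulP: "uniform_limit A (\<lambda>N a. \<Prod>n<N. hh (Suc n) a) P sequentially"
    using uc unfolding uniformly_convergent_uniform_limit_iff P_def .
  have contP: "continuous_on A P"
    by (rule uniform_limit_theorem[OF _ ulP])
       (auto intro!: always_eventually continuous_on_prod cont)
  have bP: "bounded (P ` A)" by (intro compact_imp_bounded compact_continuous_image contP A)
  have bI: "bounded ((\<lambda>a. a) ` A)" using compact_imp_bounded[OF A] by simp
  have ul1: "uniform_limit A (\<lambda>N a. a * (\<Prod>n<N. hh (Suc n) a)) (\<lambda>a. a * P a) sequentially"
    by (rule uniform_lim_mult[OF uniform_limit_const ulP bI bP])
  have ul2: "uniform_limit A gg (\<lambda>a. a * P a) sequentially"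
  proof (rule uniform_limit_Suc_shift)
    have "(\<lambda>n. gg (Suc n)) = (\<lambda>N a. a * (\<Prod>n<N. hh (Suc n) a))" by (intro ext) (simp add: gg_prod)
    then show "uniform_limit A (\<lambda>n. gg (Suc n)) (\<lambda>a. a * P a) sequentially" using ul1 by simp
  qed
  have eq: "a * P a = rGamma a" if "a \<in> A" for a
    using tendsto_uniform_limitI[OF ul2 that] gg_pointwise LIMSEQ_unique by blast
  show ?thesis using ul2 by (subst (asm) uniform_limit_cong'[where g=gg and i=rGamma]) (use eq in auto)
qed


lemma coeff_lin:
  fixes p :: "'a::comm_semiring_1 poly"
  shows "coeff (p * [:c, 1:]) k = c * coeff p k + (case k of 0 \<Rightarrow> 0 | Suc m \<Rightarrow> coeff p m)"
proof -
  have "p * [:c, 1:] = smult c p + pCons 0 p" by (simp add: mult.commute[of p] mult_pCons_left)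
  then show ?thesis by (cases k) simp_all
qed

lemma coeff_rel:
  "of_nat (coeff (\<Prod>j<n. [:2 * j + 1, 1:] :: nat poly) k) =
   coeff (\<Prod>j<n. [:of_nat (2 * j + 1), 1:] :: complex poly) k"
proof (induction n arbitrary: k)
  case 0 then show ?case by (cases k) simp_all
next
  case (Suc n)
  show ?case unfolding prod.lessThan_Suc coeff_lin
    by (cases k) (simp_all only: nat.case of_nat_add of_nat_mult of_nat_0 Suc.IH)
qed

lemma degree_lin_prod: "degree (\<Prod>j<n. [:c j, 1:] :: 'a::comm_semiring_1 poly) \<le> n"
proof -
  have "degree (\<Prod>j<n. [:c j, 1:] :: 'a poly) \<le> (\<Sum>j<n. degree ([:c j, 1:] :: 'a poly))"
    using degree_prod_sum_le[of "{..<n}" "\<lambda>j. [:c j, 1:] :: 'a poly"] by (simp add: o_def)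
  also have "\<dots> = n" by simp
  finally show ?thesis .
qed

lemma B_zero: "k > n \<Longrightarrow> B n k = 0"
  unfolding B_def using degree_lin_prod[where n=n and c="\<lambda>j. 2 * j + 1"] by (intro coeff_eq_0) simp

lemma poly_sum: "(\<Sum>k\<le>n. of_nat (B n k) * (w::complex) ^ k) = (\<Prod>j<n. w + of_nat (2 * j + 1))"
proof -
  define Q where "Q = (\<Prod>j<n. [:of_nat (2 * j + 1), 1:] :: complex poly)"
  have dQ: "degree Q \<le> n" unfolding Q_def by (rule degree_lin_prod)
  have "(\<Sum>k\<le>n. of_nat (B n k) * w ^ k) = (\<Sum>k\<le>n. coeff Q k * w ^ k)"
    unfolding B_def Q_def coeff_rel by simp
  also have "\<dots> = (\<Sum>k\<le>degree Q. coeff Q k * w ^ k)"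
    using dQ by (intro sum.mono_neutral_right) (auto simp: coeff_eq_0)
  also have "\<dots> = poly Q w" by (simp add: poly_altdef)
  also have "\<dots> = (\<Prod>j<n. w + of_nat (2 * j + 1))" unfolding Q_def poly_prod by (simp add: add.commute)
  finally show ?thesis .
qed

lemma expectation_eq:
  fixes X :: "nat \<Rightarrow> nat pmf" and z :: complex
  assumes pm: "\<And>n k. pmf (X n) k = real (B n k) / (2 ^ n * fact n)"
  shows "measure_pmf.expectation (X n) (\<lambda>k. exp (z * of_nat k)) = pochhammer ((exp z + 1) / 2) n / fact n"
proof -
  have "measure_pmf.expectation (X n) (\<lambda>k. exp (z * of_nat k)) = (\<Sum>k\<le>n. pmf (X n) k *\<^sub>R exp (z * of_nat k))"
  proof (rule integral_measure_pmf)
    fix a assume "a \<in> set_pmf (X n)"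
    then have "pmf (X n) a \<noteq> 0" by (simp add: set_pmf_iff)
    then have "B n a \<noteq> 0" using pm by auto
    then show "a \<in> {..n}" using B_zero by (meson atMost_iff not_le)
  qed simp
  also have "\<dots> = (\<Sum>k\<le>n. of_nat (B n k) * exp z ^ k) / (2 ^ n * fact n)"
    unfolding sum_divide_distrib
    by (intro sum.cong refl) (simp add: pm scaleR_conv_of_real exp_of_nat_mult[symmetric] mult.commute[of z])
  also have "\<dots> = (\<Prod>j<n. exp z + of_nat (2 * j + 1)) / (2 ^ n * fact n)" by (simp add: poly_sum)
  also have "(\<Prod>j<n. exp z + of_nat (2 * j + 1)) = (\<Prod>j<n. 2 * ((exp z + 1) / 2 + of_nat j))"
    by (intro prod.cong refl) (simp add: field_simps)
  also have "\<dots> = (\<Prod>j<n. 2) * (\<Prod>j<n. (exp z + 1) / 2 + of_nat j)"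
    by (rule prod.distrib)
  also have "\<dots> = 2 ^ n * pochhammer ((exp z + 1) / 2) n"
    by (simp add: pochhammer_prod atLeast0LessThan)
  finally show ?thesis by simp
qed

lemma seq_eq:
  fixes X :: "nat \<Rightarrow> nat pmf"
  assumes pm: "\<And>n k. pmf (X n) k = real (B n k) / (2 ^ n * fact n)"
  shows "measure_pmf.expectation (X n) (\<lambda>k. exp (z * of_nat k))
              / exp (complex_of_real (ln (real n) / 2) * (exp z - 1)) = gg n ((exp z + 1) / 2)"
proof -
  have e: "(1 - (exp z + 1) / 2) * of_real (ln (real n)) = - (complex_of_real (ln (real n) / 2) * (exp z - 1))"
    by (simp add: field_simps)
  show ?thesis unfolding expectation_eq[OF pm] gg_def e exp_minus
    by (simp only: divide_inverse)
qed


lemma nonpos_half: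
  fixes w :: complex
  assumes "w \<notin> \<int>\<^sub>\<le>\<^sub>0"
  shows "w / 2 \<notin> \<int>\<^sub>\<le>\<^sub>0" "(w + 1) / 2 \<notin> \<int>\<^sub>\<le>\<^sub>0"
proof
  assume "w / 2 \<in> \<int>\<^sub>\<le>\<^sub>0"
  then obtain m where "w / 2 = - of_nat m" by (elim nonpos_Ints_cases')
  then have "w = - of_nat (2 * m)" by simp
  then have "w \<in> \<int>\<^sub>\<le>\<^sub>0" by (metis minus_of_nat_in_nonpos_Ints)
  then show False using assms by simp
next
  show "(w + 1) / 2 \<notin> \<int>\<^sub>\<le>\<^sub>0"
  proof
    assume "(w + 1) / 2 \<in> \<int>\<^sub>\<le>\<^sub>0"
    then obtain m where m: "(w + 1) / 2 = - of_nat m" by (elim nonpos_Ints_cases')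
    have "w = 2 * ((w + 1) / 2) - 1" by (simp add: field_simps)
    also have "\<dots> = - of_nat (2 * m + 1)" unfolding m by simp
    finally have "w = - of_nat (2 * m + 1)" .
    then have "w \<in> \<int>\<^sub>\<le>\<^sub>0" by (metis minus_of_nat_in_nonpos_Ints)
    then show False using assms by simp
  qed
qed

lemma limit_expr_eq:
  assumes "exp u \<notin> \<int>\<^sub>\<le>\<^sub>0"
  shows "limit_expr u = rGamma ((exp u + 1) / 2)"
proof -
  define w where "w = exp u"
  have w: "w \<notin> \<int>\<^sub>\<le>\<^sub>0" using assms w_def by simp
  have h1: "w / 2 \<notin> \<int>\<^sub>\<le>\<^sub>0" and h2': "(w + 1) / 2 \<notin> \<int>\<^sub>\<le>\<^sub>0" using nonpos_half[OF w] by auto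
  have e12: "w / 2 + 1 / 2 = (w + 1) / 2" by (simp add: add_divide_distrib)
  have h2: "w / 2 + 1 / 2 \<notin> \<int>\<^sub>\<le>\<^sub>0" unfolding e12 by (rule h2')
  define L where "L = complex_of_real (ln 2)"
  define s where "s = complex_of_real (sqrt pi)"
  have dup: "Gamma (w / 2) * Gamma (w / 2 + 1 / 2) = exp ((1 - 2 * (w / 2)) * L) * s * Gamma (2 * (w / 2))"
    unfolding L_def s_def by (rule Gamma_legendre_duplication[OF h1 h2])
  then have dup': "Gamma (w / 2) * Gamma ((w + 1) / 2) = exp ((1 - w) * L) * s * Gamma w"
    using e12 by simp
  have G: "Gamma w \<noteq> 0" using w by (simp add: Gamma_eq_zero_iff)
  have G2: "Gamma ((w + 1) / 2) \<noteq> 0" using h2' by (simp add: Gamma_eq_zero_iff)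
  have s0: "s \<noteq> 0" unfolding s_def by simp
  have pw: "(2::complex) powr w = exp (w * L)"
  proof -
    have "Ln (complex_of_real 2) = complex_of_real (ln 2)" by (rule Ln_of_real) simp
    then have "Ln (2::complex) = L" unfolding L_def by simp
    then show ?thesis by (simp add: powr_def)
  qed
  have pe: "exp (w * L) * exp ((1 - w) * L) = 2"
  proof -
    have "exp (w * L) * exp ((1 - w) * L) = exp L" by (simp add: exp_add[symmetric] algebra_simps)
    also have "\<dots> = 2" unfolding L_def by (simp add: exp_of_real)
    finally show ?thesis .
  qed
  have "exp (w * L) * Gamma (w / 2) * Gamma ((w + 1) / 2) = exp (w * L) * (exp ((1 - w) * L) * s * Gamma w)"
    by (simp add: dup' mult.assoc)
  also have "\<dots> = (exp (w * L) * exp ((1 - w) * L)) * s * Gamma w" by (simp add: mult.assoc)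
  also have "\<dots> = 2 * s * Gamma w" by (simp add: pe)
  finally have key: "exp (w * L) * Gamma (w / 2) = 2 * s * Gamma w / Gamma ((w + 1) / 2)"
    using G2 by (simp add: eq_divide_eq)
  have "limit_expr u = exp (w * L) * Gamma (w / 2) / (2 * s * Gamma w)"
    unfolding limit_expr_def w_def[symmetric] s_def[symmetric] pw ..
  also have "\<dots> = inverse (Gamma ((w + 1) / 2))" unfolding key using G G2 s0 by (simp add: field_simps)
  also have "\<dots> = rGamma ((exp u + 1) / 2)" by (simp add: rGamma_inverse_Gamma w_def)
  finally show ?thesis .
qed

lemma limit_fun_eq: "limit_fun z = rGamma ((exp z + 1) / 2)"
proof (cases "exp z \<in> \<int>\<^sub>\<le>\<^sub>0")
  case False then show ?thesis by (simp add: limit_fun_def limit_expr_eq)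
next
  case True
  have ev: "eventually (\<lambda>u. exp u \<notin> \<int>\<^sub>\<le>\<^sub>0) (at z)"
  proof -
    have "((\<lambda>u. exp u) \<longlongrightarrow> exp z) (at z)" by (intro tendsto_intros)
    then have e1: "eventually (\<lambda>u. dist (exp u) (exp z) < 1/2) (at z)" by (rule tendstoD) simp
    have e2: "eventually (\<lambda>u. u \<noteq> z \<and> dist u z < 2 * pi) (at z)"
      unfolding eventually_at by (intro exI[of _ "2 * pi"]) (auto simp: pi_gt_zero)
    show ?thesis using e1 e2
    proof eventually_elim
      case (elim u)
      show "exp u \<notin> \<int>\<^sub>\<le>\<^sub>0"
      proof
        assume "exp u \<in> \<int>\<^sub>\<le>\<^sub>0"
        then obtain m where m: "exp u = of_int m" by (elim nonpos_Ints_cases)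
        from True obtain m' where m': "exp z = of_int m'" by (elim nonpos_Ints_cases)
        have "norm (of_int (m - m') :: complex) < 1/2" using elim m m' by (simp add: dist_norm)
        then have "real_of_int \<bar>m - m'\<bar> < 1" by (simp only: norm_of_int of_int_abs)
        then have "\<bar>m - m'\<bar> < 1" by linarith
        then have "m = m'" by linarith
        then have "exp u = exp z" using m m' by simp
        then obtain n :: int where n: "u = z + (of_int (2 * n) * pi) * \<i>" by (auto simp: exp_eq)
        have "n \<noteq> 0" using n elim by auto
        then have n1: "1 \<le> \<bar>real_of_int n\<bar>" by linarith
        have "dist u z = norm ((of_int (2 * n) * pi) * \<i>)" using n by (simp add: dist_norm)
        also have "\<dots> = 2 * \<bar>real_of_int n\<bar> * pi" by (simp add: norm_mult abs_mult)
        finally have "dist u z = 2 * \<bar>real_of_int n\<bar> * pi" .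
        moreover have "2 * pi \<le> 2 * \<bar>real_of_int n\<bar> * pi" using n1 pi_gt_zero by simp
        ultimately show False using elim by linarith
      qed
    qed
  qed
  have c: "isCont (\<lambda>u. rGamma ((exp u + 1) / 2)) z" by (intro continuous_intros) auto
  have lim: "((\<lambda>u. rGamma ((exp u + 1) / 2)) \<longlongrightarrow> rGamma ((exp z + 1) / 2)) (at z)"
    using c by (simp add: isCont_def)
  have ev2: "eventually (\<lambda>u. rGamma ((exp u + 1) / 2) = limit_expr u) (at z)"
    using ev by eventually_elim (simp add: limit_expr_eq)
  have "(limit_expr \<longlongrightarrow> rGamma ((exp z + 1) / 2)) (at z)"
    using iffD1[OF tendsto_cong[OF ev2] lim] .
  then show ?thesis by (simp add: limit_fun_def True tendsto_Lim)
qed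

theorem lemma5p3:
  fixes X :: "nat \<Rightarrow> nat pmf"
  assumes "\<And>n k. pmf (X n) k = real (B n k) / (2 ^ n * fact n)"
  shows "\<And>K. compact K \<Longrightarrow>
    uniform_limit K
      (\<lambda>n z. measure_pmf.expectation (X n) (\<lambda>k. exp (z * of_nat k))
              / exp (complex_of_real (ln (real n) / 2) * (exp z - 1)))
      limit_fun sequentially"
proof -
  fix K :: "complex set" assume K: "compact K"
  define \<phi> where "\<phi> = (\<lambda>z::complex. (exp z + 1) / 2)"
  have cA: "compact (\<phi> ` K)" unfolding \<phi>_def by (intro compact_continuous_image continuous_intros K) auto
  have ul: "uniform_limit (\<phi> ` K) gg rGamma sequentially" by (rule gg_uniform[OF cA])
  have ul': "uniform_limit K (\<lambda>n z. gg n (\<phi> z)) (\<lambda>z. rGamma (\<phi> z)) sequentially"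
    using ul unfolding uniform_limit_iff by (auto elim!: eventually_mono)
  show "uniform_limit K
      (\<lambda>n z. measure_pmf.expectation (X n) (\<lambda>k. exp (z * of_nat k))
              / exp (complex_of_real (ln (real n) / 2) * (exp z - 1)))
      limit_fun sequentially"
  proof -
    have eq1: "(\<lambda>n z. measure_pmf.expectation (X n) (\<lambda>k. exp (z * of_nat k))
              / exp (complex_of_real (ln (real n) / 2) * (exp z - 1))) = (\<lambda>n z. gg n (\<phi> z))"
      unfolding \<phi>_def by (intro ext seq_eq[OF assms])
    have eq2: "limit_fun = (\<lambda>z. rGamma (\<phi> z))" unfolding \<phi>_def by (intro ext limit_fun_eq)
    show ?thesis unfolding eq1 eq2 by (rule ul')
  qed
qed

end
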